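(* Let $\mathcal{R}$ be a non-commutative prime ring of characteristic different from $2$, with Utumi quotient ring $\mathcal{U}$ and extended centroid $\mathcal{C}$, and let $f(\zeta_1,\ldots,\zeta_n)$ be a multilinear polynomial over $\mathcal{C}$ which is not central-valued on $\mathcal{R}$. Let $a_1,\ldots,a_6\in\mathcal{U}$ be such that $$a_1f(\zeta)^2+a_2f(\zeta)a_3f(\zeta)+f(\zeta)a_5f(\zeta)a_6+f(\zeta)a_4f(\zeta)-a_5f(\zeta)^2a_6=0$$ for all $\zeta=(\zeta_1,\ldots,\zeta_n)\in\mathcal{R}^n$. If $\mathcal{R}$ does not satisfy any nontrivial generalized polynomial identity, then one of the following holds: (1) $a_2,a_5\in\mathcal{C}$; (2) $a_2,a_6\in\mathcal{C}$; (3) $a_3,a_5\in\mathcal{C}$; (4) $a_3,a_6\in\mathcal{C}$.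
   Context: A ring $\mathcal{R}$ is prime if $x\mathcal{R}y=0$ implies $x=0$ or $y=0$. $\mathcal{U}$ is the Utumi quotient ring of $\mathcal{R}$ and $\mathcal{C}$, its center, the extended centroid. A generalized polynomial identity is an element of the free product $\mathcal{U}*_{\mathcal{C}}\mathcal{C}\{X\}$ (noncommutative polynomials with coefficients from $\mathcal{U}$ interspersed) vanishing on all substitutions from $\mathcal{R}$; it is nontrivial if it is a nonzero element of that free product. A multilinear polynomial over $\mathcal{C}$ has each variable exactly once in every monomial; non-central means its values on $\mathcal{R}$ do not all lie in $\mathcal{C}$. *)

theory Defs
  imports "HOL-Combinatorics.Permutations"
begin

text \<open>The ambient type 'a (a unital ring) plays the role of the Utumi quotient ring U;
  the prime ring R is a (not necessarily unital) subring R :: 'a set.\<close>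

definition subring_of :: "'a::ring_1 set \<Rightarrow> bool" where
  "subring_of R \<longleftrightarrow> 0 \<in> R \<and> (\<forall>x\<in>R. \<forall>y\<in>R. x - y \<in> R \<and> x * y \<in> R)"

definition prime_ring :: "'a::ring_1 set \<Rightarrow> bool" where
  "prime_ring R \<longleftrightarrow> subring_of R \<and>
     (\<forall>x\<in>R. \<forall>y\<in>R. (\<forall>r\<in>R. x * r * y = 0) \<longrightarrow> x = 0 \<or> y = 0)"

definition noncommutative :: "'a::ring_1 set \<Rightarrow> bool" where
  "noncommutative R \<longleftrightarrow> (\<exists>x\<in>R. \<exists>y\<in>R. x * y \<noteq> y * x)"

definition char_not_2 :: "'a::ring_1 set \<Rightarrow> bool" where
  "char_not_2 R \<longleftrightarrow> \<not> (\<forall>x\<in>R. x + x = 0)"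

definition right_ideal_of :: "'a::ring_1 set \<Rightarrow> 'a set \<Rightarrow> bool" where
  "right_ideal_of R I \<longleftrightarrow> I \<subseteq> R \<and> 0 \<in> I \<and>
     (\<forall>x\<in>I. \<forall>y\<in>I. x - y \<in> I) \<and> (\<forall>x\<in>I. \<forall>r\<in>R. x * r \<in> I)"

definition dense_right_ideal :: "'a::ring_1 set \<Rightarrow> 'a set \<Rightarrow> bool" where
  "dense_right_ideal R I \<longleftrightarrow> right_ideal_of R I \<and>
     (\<forall>r1\<in>R. \<forall>r2\<in>R. r1 \<noteq> 0 \<longrightarrow> (\<exists>r\<in>R. r1 * r \<noteq> 0 \<and> r2 * r \<in> I))"

definition right_module_hom :: "'a::ring_1 set \<Rightarrow> 'a set \<Rightarrow> ('a \<Rightarrow> 'a) \<Rightarrow> bool" where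
  "right_module_hom R I \<phi> \<longleftrightarrow> (\<forall>x\<in>I. \<phi> x \<in> R) \<and>
     (\<forall>x\<in>I. \<forall>y\<in>I. \<phi> (x + y) = \<phi> x + \<phi> y) \<and>
     (\<forall>x\<in>I. \<forall>r\<in>R. \<phi> (x * r) = \<phi> x * r)"

text \<open>The whole type 'a is the Utumi (maximal right) quotient ring of R:
  Utumi's axiomatic characterisation, which determines it up to isomorphism over R.\<close>
definition is_utumi_quotient_ring :: "'a::ring_1 set \<Rightarrow> bool" where
  "is_utumi_quotient_ring R \<longleftrightarrow> subring_of R \<and>
     (\<forall>q. \<exists>I. dense_right_ideal R I \<and> (\<forall>x\<in>I. q * x \<in> R)) \<and>
     (\<forall>q I. dense_right_ideal R I \<and> (\<forall>x\<in>I. q * x = 0) \<longrightarrow> q = 0) \<and>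
     (\<forall>I \<phi>. dense_right_ideal R I \<and> right_module_hom R I \<phi> \<longrightarrow>
        (\<exists>q. \<forall>x\<in>I. \<phi> x = q * x))"

definition ext_centroid :: "'a::ring_1 set" where
  "ext_centroid = {c. \<forall>u. c * u = u * c}"

definition multilin_coeffs :: "nat \<Rightarrow> ((nat \<Rightarrow> nat) \<Rightarrow> 'a::ring_1) \<Rightarrow> bool" where
  "multilin_coeffs n \<alpha> \<longleftrightarrow> (\<forall>s. s permutes {..<n} \<longrightarrow> \<alpha> s \<in> ext_centroid)"

definition multilin_eval :: "nat \<Rightarrow> ((nat \<Rightarrow> nat) \<Rightarrow> 'a::ring_1) \<Rightarrow> (nat \<Rightarrow> 'a) \<Rightarrow> 'a" where
  "multilin_eval n \<alpha> z =
     (\<Sum>s\<in>{s. s permutes {..<n}}. \<alpha> s * prod_list (map (\<lambda>i. z (s i)) [0..<n]))"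

definition central_valued :: "'a::ring_1 set \<Rightarrow> nat \<Rightarrow> ((nat \<Rightarrow> nat) \<Rightarrow> 'a) \<Rightarrow> bool" where
  "central_valued R n \<alpha> \<longleftrightarrow>
     (\<forall>z. (\<forall>i<n. z i \<in> R) \<longrightarrow> multilin_eval n \<alpha> z \<in> ext_centroid)"

text \<open>Generalized polynomials: finite lists of generalized monomials
  u0 X_{w1} u1 X_{w2} ... X_{wk} uk, each given as (coefficient list [u0..uk], word [w1..wk]).\<close>
type_synonym 'a gpoly = "('a list \<times> nat list) list"

definition gpoly_wf :: "'a gpoly \<Rightarrow> bool" where
  "gpoly_wf P \<longleftrightarrow> (\<forall>(us, ws)\<in>set P. length us = Suc (length ws))"

definition gmono_eval :: "'a::ring_1 list \<Rightarrow> nat list \<Rightarrow> (nat \<Rightarrow> 'a) \<Rightarrow> 'a" where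
  "gmono_eval us ws z = hd us * prod_list (map2 (\<lambda>w u. z w * u) ws (tl us))"

definition gpoly_eval :: "'a::ring_1 gpoly \<Rightarrow> (nat \<Rightarrow> 'a) \<Rightarrow> 'a" where
  "gpoly_eval P z = sum_list (map (\<lambda>(us, ws). gmono_eval us ws z) P)"

definition C_functional :: "('a::ring_1 \<Rightarrow> 'a) \<Rightarrow> bool" where
  "C_functional \<phi> \<longleftrightarrow> (\<forall>x. \<phi> x \<in> ext_centroid) \<and> (\<forall>x y. \<phi> (x + y) = \<phi> x + \<phi> y) \<and>
     (\<forall>c\<in>ext_centroid. \<forall>x. \<phi> (c * x) = c * \<phi> x)"

text \<open>P is zero in U *_C C{X} = (direct sum over words w of U \<otimes>_C ... \<otimes>_C U) iff, for every
  word w, the tensor collected from the monomials with word w vanishes; over the field C a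
  tensor vanishes iff all products of C-linear functionals U \<rightarrow> C annihilate it.\<close>
definition gpoly_zero :: "'a::ring_1 gpoly \<Rightarrow> bool" where
  "gpoly_zero P \<longleftrightarrow> (\<forall>w \<phi>. (\<forall>i. C_functional (\<phi> i)) \<longrightarrow>
     sum_list (map (\<lambda>(us, ws). prod_list (map2 \<phi> [0..<length us] us))
                   (filter (\<lambda>(us, ws). ws = w) P)) = 0)"

definition satisfies_nontrivial_GPI :: "'a::ring_1 set \<Rightarrow> bool" where
  "satisfies_nontrivial_GPI R \<longleftrightarrow> (\<exists>P. gpoly_wf P \<and> \<not> gpoly_zero P \<and>
     (\<forall>z. (\<forall>i. z i \<in> R) \<longrightarrow> gpoly_eval P z = 0))"

end

theory Submission
  imports Defs
begin


abbreviation CC :: "'a::ring_1 set" where "CC \<equiv> ext_centroid"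

lemma C_comm: "c \<in> ext_centroid \<Longrightarrow> c * u = u * c"
  by (simp add: ext_centroid_def)
lemma C_0[simp]: "0 \<in> ext_centroid" by (simp add: ext_centroid_def)
lemma C_1[simp]: "1 \<in> ext_centroid" by (simp add: ext_centroid_def)
lemma C_add: "c \<in> ext_centroid \<Longrightarrow> d \<in> ext_centroid \<Longrightarrow> c + d \<in> ext_centroid"
  by (simp add: ext_centroid_def algebra_simps)
lemma C_diff: "c \<in> ext_centroid \<Longrightarrow> d \<in> ext_centroid \<Longrightarrow> c - d \<in> ext_centroid"
  by (simp add: ext_centroid_def algebra_simps)
lemma C_uminus: "c \<in> ext_centroid \<Longrightarrow> - c \<in> ext_centroid"
  by (simp add: ext_centroid_def algebra_simps)
lemma C_mult: "c \<in> ext_centroid \<Longrightarrow> d \<in> ext_centroid \<Longrightarrow> c * d \<in> ext_centroid"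
proof -
  assume c: "c \<in> ext_centroid" and d: "d \<in> ext_centroid"
  have "c * d * u = u * (c * d)" for u
  proof -
    have "c * d * u = c * (d * u)" by (simp add: mult.assoc)
    also have "\<dots> = c * (u * d)" using C_comm[OF d, of u] by simp
    also have "\<dots> = (c * u) * d" by (simp add: mult.assoc)
    also have "\<dots> = (u * c) * d" using C_comm[OF c, of u] by simp
    finally show ?thesis by (simp add: mult.assoc)
  qed
  then show ?thesis unfolding ext_centroid_def by blast
qed

inductive_set tsi :: "'a::ring_1 set \<Rightarrow> 'a set \<Rightarrow> 'a set" for R I where
  base: "x \<in> I \<Longrightarrow> x \<in> tsi R I"
| diff: "x \<in> tsi R I \<Longrightarrow> y \<in> tsi R I \<Longrightarrow> x - y \<in> tsi R I"
| lmul: "x \<in> tsi R I \<Longrightarrow> r \<in> R \<Longrightarrow> r * x \<in> tsi R I"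
| rmul: "x \<in> tsi R I \<Longrightarrow> r \<in> R \<Longrightarrow> x * r \<in> tsi R I"

lemma C_inverse:
  fixes R :: "'a::ring_1 set" and c :: 'a
  assumes pr: "prime_ring R" and ut: "is_utumi_quotient_ring R"
    and c: "c \<in> ext_centroid" and c0: "c \<noteq> 0"
  shows "\<exists>q\<in>ext_centroid. c * q = 1"
proof -
  have sub: "subring_of R" using pr prime_ring_def by blast
  have subD: "x - y \<in> R" "x * y \<in> R" if "x \<in> R" "y \<in> R" for x y
    using sub that unfolding subring_of_def by auto
  have prime: "x = 0 \<or> y = 0" if "x \<in> R" "y \<in> R" "\<forall>r\<in>R. x * r * y = 0" for x y
    using pr that unfolding prime_ring_def by blast
  obtain I where dI: "dense_right_ideal R I" and cI: "\<forall>x\<in>I. c * x \<in> R"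
    using ut unfolding is_utumi_quotient_ring_def by blast
  have uniq: "\<And>q I. dense_right_ideal R I \<Longrightarrow> (\<forall>x\<in>I. q * x = 0) \<Longrightarrow> q = 0"
    using ut unfolding is_utumi_quotient_ring_def by blast
  have hom: "\<And>I \<phi>. dense_right_ideal R I \<Longrightarrow> right_module_hom R I \<phi> \<Longrightarrow> \<exists>q. \<forall>x\<in>I. \<phi> x = q * x"
    using ut unfolding is_utumi_quotient_ring_def by blast
  have IR: "I \<subseteq> R" and I0: "0 \<in> I" using dI unfolding dense_right_ideal_def right_ideal_of_def by auto
  let ?J = "tsi R I"
  have JR: "x \<in> R \<and> c * x \<in> R" if "x \<in> ?J" for x
    using that
  proof induct
    case (base x) then show ?case using IR cI by auto
  next
    case (diff x y) then show ?case using subD by (simp add: right_diff_distrib)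
  next
    case (lmul x r)
    have "c * (r * x) = r * (c * x)" using C_comm[OF c, of r] by (metis mult.assoc)
    then show ?case using lmul subD by auto
  next
    case (rmul x r)
    then show ?case using subD by (simp add: mult.assoc[symmetric])
  qed
  obtain y0 where y0: "y0 \<in> I" "c * y0 \<noteq> 0" using uniq[OF dI] c0 by blast
  have y0J: "y0 \<in> ?J" using y0 tsi.base by blast
  have cy0R: "c * y0 \<in> R" using JR y0J by blast
  have inj: "x = 0" if "x \<in> ?J" "c * x = 0" for x
  proof -
    have "\<forall>r\<in>R. (c * y0) * r * x = 0"
    proof
      fix r assume "r \<in> R"
      have "(c * y0) * r * x = c * (y0 * r * x)" by (simp add: mult.assoc)
      also have "\<dots> = (y0 * r * x) * c" using C_comm[OF c] by blast
      also have "\<dots> = y0 * r * (c * x)" using C_comm[OF c, of x] by (simp add: mult.assoc)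
      finally show "(c * y0) * r * x = 0" using that by simp
    qed
    then show ?thesis using prime[OF cy0R] JR[OF that(1)] y0 by blast
  qed
  let ?K = "(\<lambda>x. c * x) ` ?J"
  have J0: "0 \<in> ?J" using I0 tsi.base by blast
  have Jadd: "x + y \<in> ?J" if "x \<in> ?J" "y \<in> ?J" for x y
  proof -
    have "0 - y \<in> ?J" using J0 that tsi.diff by blast
    then have "x - (0 - y) \<in> ?J" using that tsi.diff by blast
    then show ?thesis by simp
  qed
  have KR: "?K \<subseteq> R" using JR by auto
  have K2: "r * k \<in> ?K" if kK: "k \<in> ?K" and rR: "r \<in> R" for k r
  proof -
    obtain x where x: "x \<in> ?J" "k = c * x" using kK by blast
    have "r * k = c * (r * x)" using C_comm[OF c, of r] x by (metis mult.assoc)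
    then show ?thesis using x tsi.lmul that by blast
  qed
  have dK: "dense_right_ideal R ?K"
    unfolding dense_right_ideal_def right_ideal_of_def
  proof (intro conjI ballI impI)
    show "?K \<subseteq> R" by fact
    show "0 \<in> ?K" using J0 by force
    fix x y assume "x \<in> ?K" "y \<in> ?K"
    then show "x - y \<in> ?K" using tsi.diff by (force simp: right_diff_distrib[symmetric])
  next
    fix x r assume "x \<in> ?K" "r \<in> R"
    then obtain x' where "x' \<in> ?J" "x = c * x'" by blast
    then have "x * r = c * (x' * r)" "x' * r \<in> ?J" using tsi.rmul \<open>r \<in> R\<close> by (auto simp: mult.assoc)
    then show "x * r \<in> ?K" by blast
  next
    fix r1 r2 assume r1: "r1 \<in> R" and r2: "r2 \<in> R" and nz: "r1 \<noteq> 0"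
    have "\<exists>k\<in>?K. r1 * k \<noteq> 0"
    proof (rule ccontr)
      assume "\<not> ?thesis"
      then have all: "\<forall>k\<in>?K. r1 * k = 0" by blast
      have "\<forall>r\<in>R. r1 * r * (c * y0) = 0"
      proof
        fix r assume "r \<in> R"
        have "r * (c * y0) \<in> ?K" using K2 y0J \<open>r \<in> R\<close> by blast
        then have "r1 * (r * (c * y0)) = 0" using all by blast
        then show "r1 * r * (c * y0) = 0" by (simp add: mult.assoc)
      qed
      then show False using prime[OF r1 cy0R] nz y0 by blast
    qed
    then obtain k where k: "k \<in> ?K" "r1 * k \<noteq> 0" by blast
    show "\<exists>r\<in>R. r1 * r \<noteq> 0 \<and> r2 * r \<in> ?K"
      using k K2 KR r2 by blast
  qed
  define \<phi> where "\<phi> = (\<lambda>y. SOME x. x \<in> ?J \<and> y = c * x)"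
  have \<phi>: "\<phi> (c * x) = x" if "x \<in> ?J" for x
  proof -
    have "\<exists>x'. x' \<in> ?J \<and> c * x = c * x'" using that by blast
    then have "\<phi> (c * x) \<in> ?J \<and> c * x = c * \<phi> (c * x)"
      unfolding \<phi>_def by (rule someI_ex)
    then have "c * (\<phi> (c * x) - x) = 0" "\<phi> (c * x) - x \<in> ?J"
      using that tsi.diff by (auto simp: right_diff_distrib)
    then show ?thesis using inj by fastforce
  qed
  have "right_module_hom R ?K \<phi>"
    unfolding right_module_hom_def
  proof (intro conjI ballI)
    fix k assume "k \<in> ?K" then show "\<phi> k \<in> R" using \<phi> JR by auto
  next
    fix k l assume "k \<in> ?K" "l \<in> ?K"
    then obtain x y where "x \<in> ?J" "y \<in> ?J" "k = c * x" "l = c * y" by blast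
    then show "\<phi> (k + l) = \<phi> k + \<phi> l" using \<phi> Jadd by (simp add: distrib_left[symmetric])
  next
    fix k r assume "k \<in> ?K" "r \<in> R"
    then obtain x where "x \<in> ?J" "k = c * x" by blast
    then have "x * r \<in> ?J" "k * r = c * (x * r)" using tsi.rmul \<open>r \<in> R\<close> by (auto simp: mult.assoc)
    then show "\<phi> (k * r) = \<phi> k * r" using \<phi> \<open>x \<in> ?J\<close> \<open>k = c * x\<close> by simp
  qed
  then obtain q where q: "\<forall>k\<in>?K. \<phi> k = q * k" using hom dK by blast
  have "\<forall>x\<in>I. (q * c - 1) * x = 0"
  proof
    fix x assume "x \<in> I"
    then have xJ: "x \<in> ?J" by (rule tsi.base)
    then have "\<phi> (c * x) = q * (c * x)" using q by blast
    then show "(q * c - 1) * x = 0" using \<phi>[OF xJ] by (simp add: left_diff_distrib mult.assoc)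
  qed
  then have "q * c - 1 = 0" using uniq[OF dI] by blast
  then have qc: "q * c = 1" by simp
  then have cq: "c * q = 1" using C_comm[OF c] by simp
  have "q \<in> ext_centroid" unfolding ext_centroid_def
  proof (intro CollectI allI)
    fix u
    have "q * u = q * u * (c * q)" using cq by simp
    also have "\<dots> = q * (u * c) * q" by (simp add: mult.assoc)
    also have "\<dots> = q * (c * u) * q" using C_comm[OF c, of u] by simp
    also have "\<dots> = (q * c) * u * q" by (simp add: mult.assoc)
    finally show "q * u = u * q" using qc by simp
  qed
  then show ?thesis using cq by blast
qed



definition fgraph :: "('a::ring_1 \<times> 'a) set \<Rightarrow> bool" where
  "fgraph G \<longleftrightarrow> (0,0) \<in> G \<and> (\<forall>x v. (x,v) \<in> G \<longrightarrow> v \<in> ext_centroid) \<and>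
     (\<forall>x v y w. (x,v) \<in> G \<longrightarrow> (y,w) \<in> G \<longrightarrow> (x+y, v+w) \<in> G) \<and>
     (\<forall>x v c. (x,v) \<in> G \<longrightarrow> c \<in> ext_centroid \<longrightarrow> (c*x, c*v) \<in> G) \<and>
     (\<forall>x v w. (x,v) \<in> G \<longrightarrow> (x,w) \<in> G \<longrightarrow> w = v)"

definition Cfield :: "'a::ring_1 itself \<Rightarrow> bool" where
  "Cfield T \<longleftrightarrow> (\<forall>c::'a. c \<in> ext_centroid \<longrightarrow> c \<noteq> 0 \<longrightarrow> (\<exists>q\<in>ext_centroid. c * q = 1))"

lemma fgD:
  assumes "fgraph G"
  shows fg0: "(0,0) \<in> G" and fgv: "(x,v) \<in> G \<Longrightarrow> v \<in> ext_centroid"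
    and fgadd: "(x,v) \<in> G \<Longrightarrow> (y,w) \<in> G \<Longrightarrow> (x+y, v+w) \<in> G"
    and fgsc: "(x,v) \<in> G \<Longrightarrow> c \<in> ext_centroid \<Longrightarrow> (c*x, c*v) \<in> G"
    and fgfun: "(x,v) \<in> G \<Longrightarrow> (x,w) \<in> G \<Longrightarrow> w = v"
  using assms unfolding fgraph_def by blast+

lemma extend_functional:
  fixes G0 :: "('a::ring_1 \<times> 'a) set"
  assumes F: "Cfield TYPE('a)" and G0: "fgraph G0"
  shows "\<exists>\<phi>. C_functional \<phi> \<and> (\<forall>x v. (x,v) \<in> G0 \<longrightarrow> \<phi> x = v)"
proof -
  let ?A = "{G. fgraph G \<and> G0 \<subseteq> G}"
  have "\<forall>Ch\<in>chains ?A. \<exists>U\<in>?A. \<forall>X\<in>Ch. X \<subseteq> U"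
  proof
    fix Ch assume Ch: "Ch \<in> chains ?A"
    show "\<exists>U\<in>?A. \<forall>X\<in>Ch. X \<subseteq> U"
    proof (cases "Ch = {}")
      case True then show ?thesis using G0 by blast
    next
      case False
      have sub: "Ch \<subseteq> ?A" using Ch chainsD2 by blast
      have ch: "X \<subseteq> Y \<or> Y \<subseteq> X" if "X \<in> Ch" "Y \<in> Ch" for X Y using chainsD[OF Ch that] .
      have fg: "fgraph X" if "X \<in> Ch" for X using sub that by blast
      have "fgraph (\<Union>Ch)" unfolding fgraph_def
      proof (intro conjI allI impI)
        obtain X where "X \<in> Ch" using False by blast
        then show "(0,0) \<in> \<Union>Ch" using fg fg0 by blast
      next
        fix x v :: 'a assume "(x,v) \<in> \<Union>Ch"
        then obtain X where "X \<in> Ch" "(x,v) \<in> X" by blast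
        then show "v \<in> ext_centroid" using fg fgv by blast
      next
        fix x v y w :: 'a assume a: "(x,v) \<in> \<Union>Ch" "(y,w) \<in> \<Union>Ch"
        obtain X where X: "X \<in> Ch" "(x,v) \<in> X" using a(1) by (rule UnionE)
        obtain Y where Y: "Y \<in> Ch" "(y,w) \<in> Y" using a(2) by (rule UnionE)
        note XY = X Y
        show "(x+y, v+w) \<in> \<Union>Ch"
        proof (cases "X \<subseteq> Y")
          case True then have "(x+y, v+w) \<in> Y" using XY fgadd[OF fg[of Y]] by blast
          then show ?thesis using XY by blast
        next
          case False then have "Y \<subseteq> X" using ch XY by blast
          then have "(x+y, v+w) \<in> X" using XY fgadd[OF fg[of X]] by blast
          then show ?thesis using XY by blast
        qed
      next
        fix x v c :: 'a assume "(x,v) \<in> \<Union>Ch" "c \<in> ext_centroid"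
        then obtain X where "X \<in> Ch" "(x,v) \<in> X" "c \<in> ext_centroid" by blast
        then have "(c*x, c*v) \<in> X" using fgsc[OF fg] by blast
        then show "(c*x, c*v) \<in> \<Union>Ch" using \<open>X \<in> Ch\<close> by blast
      next
        fix x v w :: 'a assume a: "(x,v) \<in> \<Union>Ch" "(x,w) \<in> \<Union>Ch"
        obtain X where X: "X \<in> Ch" "(x,v) \<in> X" using a(1) by (rule UnionE)
        obtain Y where Y: "Y \<in> Ch" "(x,w) \<in> Y" using a(2) by (rule UnionE)
        note XY = X Y
        show "w = v"
        proof (cases "X \<subseteq> Y")
          case True then show ?thesis using XY fgfun[OF fg[of Y]] by blast
        next
          case False then have "Y \<subseteq> X" using ch XY by blast
          then show ?thesis using XY fgfun[OF fg[of X]] by blast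
        qed
      qed
      moreover have "G0 \<subseteq> \<Union>Ch" using False sub by blast
      ultimately show ?thesis by blast
    qed
  qed
  from Zorn_Lemma2[OF this] obtain M where M: "M \<in> ?A" and max: "\<forall>X\<in>?A. M \<subseteq> X \<longrightarrow> X = M"
    ..
  have fM: "fgraph M" using M by simp
  have M0: "(0,0) \<in> M" and Mv: "\<And>x v. (x,v) \<in> M \<Longrightarrow> v \<in> ext_centroid"
    and Madd: "\<And>x v y w. (x,v) \<in> M \<Longrightarrow> (y,w) \<in> M \<Longrightarrow> (x+y, v+w) \<in> M"
    and Msc: "\<And>x v c. (x,v) \<in> M \<Longrightarrow> c \<in> ext_centroid \<Longrightarrow> (c*x, c*v) \<in> M"
    and Mfun: "\<And>x v w. (x,v) \<in> M \<Longrightarrow> (x,w) \<in> M \<Longrightarrow> w = v"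
    using fgD[OF fM] by blast+
  have tot: "\<exists>v. (x,v) \<in> M" for x
  proof (rule ccontr)
    assume ny: "\<not> (\<exists>v. (x,v) \<in> M)"
    define M' where "M' = {(z + c*x, v) | z v c. (z,v) \<in> M \<and> c \<in> ext_centroid}"
    have MM': "M \<subseteq> M'"
    proof
      fix p assume "p \<in> M"
      then obtain z v where "p = (z,v)" "(z,v) \<in> M" by (cases p) auto
      then have "p = (z + 0*x, v)" by simp
      then show "p \<in> M'" unfolding M'_def using \<open>(z,v) \<in> M\<close> C_0 by blast
    qed
    have M'I: "(z + c*x, v) \<in> M'" if "(z,v) \<in> M" "c \<in> ext_centroid" for z v c
      unfolding M'_def using that by blast
    have xM': "(x, 0) \<in> M'" using M'I[OF M0 C_1] by simp
    have "fgraph M'" unfolding fgraph_def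
    proof (intro conjI allI impI)
      show "(0,0) \<in> M'" using MM' M0 by blast
    next
      fix z v :: 'a assume "(z,v) \<in> M'" then show "v \<in> ext_centroid" unfolding M'_def using Mv by blast
    next
      fix z v y w :: 'a assume "(z,v) \<in> M'" "(y,w) \<in> M'"
      then obtain z1 c1 z2 c2 where h: "z = z1 + c1*x" "(z1,v) \<in> M" "c1 \<in> ext_centroid"
        "y = z2 + c2*x" "(z2,w) \<in> M" "c2 \<in> ext_centroid" unfolding M'_def by blast
      have "z + y = (z1+z2) + (c1+c2)*x" using h by (simp add: algebra_simps)
      then show "(z+y, v+w) \<in> M'" using M'I[OF Madd[OF h(2) h(5)] C_add[OF h(3) h(6)]] by simp
    next
      fix z v e :: 'a assume "(z,v) \<in> M'" "e \<in> ext_centroid"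
      then obtain z1 c1 where h: "z = z1 + c1*x" "(z1,v) \<in> M" "c1 \<in> ext_centroid" unfolding M'_def by blast
      have "e * z = e*z1 + (e*c1)*x" using h by (simp add: algebra_simps)
      then show "(e*z, e*v) \<in> M'" using M'I[OF Msc[OF h(2) \<open>e \<in> ext_centroid\<close>] C_mult[OF \<open>e \<in> ext_centroid\<close> h(3)]] by simp
    next
      fix z v w :: 'a assume "(z,v) \<in> M'" "(z,w) \<in> M'"
      then obtain z1 c1 z2 c2 where h: "z = z1 + c1*x" "(z1,v) \<in> M" "c1 \<in> ext_centroid"
        "z = z2 + c2*x" "(z2,w) \<in> M" "c2 \<in> ext_centroid" unfolding M'_def by blast
      show "w = v"
      proof (cases "c1 = c2")
        case True
        then have "z1 = z2" using h by simp
        then show ?thesis using h Mfun by blast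
      next
        case False
        have d: "c1 - c2 \<in> ext_centroid" "c1 - c2 \<noteq> 0" using h False C_diff by auto
        then obtain q where q: "q \<in> ext_centroid" "(c1 - c2) * q = 1" using F unfolding Cfield_def by blast
        have qd: "q * (c1 - c2) = 1" using q C_comm[OF d(1), of q] by simp
        have eq: "(c1 - c2) * x = z2 - z1" using h by (simp add: algebra_simps)
        have "(-1 * z1, -1 * v) \<in> M" using Msc h C_uminus[OF C_1] by blast
        then have "(z2 + -1*z1, w + -1*v) \<in> M" using Madd h by blast
        then have "(z2 - z1, w - v) \<in> M" by simp
        then have "(q * (z2 - z1), q * (w - v)) \<in> M" using Msc q by blast
        moreover have "q * (z2 - z1) = x" using eq qd by (metis mult.assoc mult_1)
        ultimately show ?thesis using ny by blast
      qed
    qed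
    then have "M' \<in> ?A" using MM' M by blast
    then have "M' = M" using max MM' by blast
    then show False using xM' ny by blast
  qed
  define \<phi> where "\<phi> x = (SOME v. (x,v) \<in> M)" for x
  have \<phi>M: "(x, \<phi> x) \<in> M" for x unfolding \<phi>_def using tot by (rule someI_ex)
  have \<phi>eq: "\<phi> x = v" if "(x,v) \<in> M" for x v using Mfun[OF that \<phi>M] .
  have "C_functional \<phi>" unfolding C_functional_def
  proof (intro conjI allI ballI)
    fix x :: 'a show "\<phi> x \<in> ext_centroid" using Mv[OF \<phi>M] .
  next
    fix x y :: 'a show "\<phi> (x + y) = \<phi> x + \<phi> y" using \<phi>eq[OF Madd[OF \<phi>M \<phi>M]] .
  next
    fix c x :: 'a assume "c \<in> ext_centroid"
    show "\<phi> (c * x) = c * \<phi> x" using \<phi>eq[OF Msc[OF \<phi>M \<open>c \<in> ext_centroid\<close>]] .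
  qed
  moreover have "\<forall>x v. (x,v) \<in> G0 \<longrightarrow> \<phi> x = v" using M \<phi>eq by blast
  ultimately show ?thesis by blast
qed

lemma functional_exists:
  fixes x :: "'a::ring_1"
  assumes F: "Cfield TYPE('a)" and x: "x \<notin> ext_centroid" and p: "p \<in> ext_centroid" and q: "q \<in> ext_centroid"
  shows "\<exists>\<phi>. C_functional \<phi> \<and> \<phi> 1 = p \<and> \<phi> x = q"
proof -
  define G0 where "G0 = {(c + d*x, c*p + d*q) | c d. c \<in> ext_centroid \<and> d \<in> ext_centroid}"
  have G0I: "(c + d*x, c*p + d*q) \<in> G0" if "c \<in> ext_centroid" "d \<in> ext_centroid" for c d
    unfolding G0_def using that by blast
  have "fgraph G0" unfolding fgraph_def
  proof (intro conjI allI impI)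
    show "(0,0) \<in> G0" using G0I[OF C_0 C_0] by simp
  next
    fix z v :: 'a assume "(z,v) \<in> G0" then show "v \<in> ext_centroid" unfolding G0_def using p q C_add C_mult by blast
  next
    fix z v y w :: 'a assume "(z,v) \<in> G0" "(y,w) \<in> G0"
    then obtain c1 d1 c2 d2 where h: "z = c1 + d1*x" "v = c1*p + d1*q" "y = c2 + d2*x" "w = c2*p+d2*q"
      "c1 \<in> ext_centroid" "d1 \<in> ext_centroid" "c2 \<in> ext_centroid" "d2 \<in> ext_centroid" unfolding G0_def by blast
    have "z + y = (c1+c2) + (d1+d2)*x" "v + w = (c1+c2)*p + (d1+d2)*q" using h by (simp_all add: algebra_simps)
    then show "(z+y, v+w) \<in> G0" using G0I[OF C_add[OF h(5) h(7)] C_add[OF h(6) h(8)]] by simp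
  next
    fix z v e :: 'a assume "(z,v) \<in> G0" "e \<in> ext_centroid"
    then obtain c1 d1 where h: "z = c1 + d1*x" "v = c1*p + d1*q"
      "c1 \<in> ext_centroid" "d1 \<in> ext_centroid" unfolding G0_def by blast
    have "e*z = (e*c1) + (e*d1)*x" "e*v = (e*c1)*p + (e*d1)*q" using h by (simp_all add: algebra_simps)
    then show "(e*z, e*v) \<in> G0" using G0I[OF C_mult[OF \<open>e \<in> ext_centroid\<close> h(3)] C_mult[OF \<open>e \<in> ext_centroid\<close> h(4)]] by simp
  next
    fix z v w :: 'a assume "(z,v) \<in> G0" "(z,w) \<in> G0"
    then obtain c1 d1 c2 d2 where h: "z = c1 + d1*x" "v = c1*p + d1*q" "z = c2 + d2*x" "w = c2*p+d2*q"
      "c1 \<in> ext_centroid" "d1 \<in> ext_centroid" "c2 \<in> ext_centroid" "d2 \<in> ext_centroid" unfolding G0_def by blast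
    have "d1 = d2"
    proof (rule ccontr)
      assume ne: "d1 \<noteq> d2"
      have d: "d1 - d2 \<in> ext_centroid" "d1 - d2 \<noteq> 0" using h ne C_diff by auto
      then obtain r where r: "r \<in> ext_centroid" "(d1 - d2) * r = 1" using F unfolding Cfield_def by blast
      have rd: "r * (d1 - d2) = 1" using r C_comm[OF d(1), of r] by simp
      have eq: "(d1 - d2) * x = c2 - c1" using h by (simp add: algebra_simps)
      have "x = r * (c2 - c1)" using eq rd by (metis mult.assoc mult_1)
      moreover have "r * (c2 - c1) \<in> ext_centroid" using r h C_mult C_diff by blast
      ultimately have "x \<in> ext_centroid" by simp
      then show False using x by blast
    qed
    then have "c1 = c2" using h by simp
    then show "w = v" using h \<open>d1 = d2\<close> by simp
  qed
  then obtain \<phi> where \<phi>: "C_functional \<phi>" "\<forall>z v. (z,v) \<in> G0 \<longrightarrow> \<phi> z = v"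
    using extend_functional[OF F] by blast
  have "(1, p) \<in> G0" using G0I[OF C_1 C_0] by simp
  have "(x, q) \<in> G0" using G0I[OF C_0 C_1] by simp
  then show ?thesis using \<phi> \<open>(1, p) \<in> G0\<close> by blast
qed



definition blk :: "nat \<Rightarrow> 'a::ring_1 \<Rightarrow> 'a list" where "blk n c = replicate (n - 1) 1 @ [c]"
definition wd :: "nat \<Rightarrow> (nat \<Rightarrow> nat) \<Rightarrow> nat list" where "wd n s = map s [0..<n]"
definition mnm :: "nat \<Rightarrow> 'a::ring_1 \<Rightarrow> 'a \<Rightarrow> 'a \<Rightarrow> (nat \<Rightarrow> nat) \<Rightarrow> (nat \<Rightarrow> nat) \<Rightarrow> 'a list \<times> nat list" where
  "mnm n c0 c1 c2 s t = (c0 # blk n c1 @ blk n c2, wd n s @ wd n t)"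
definition mm :: "nat \<Rightarrow> (nat \<Rightarrow> 'a::ring_1) \<Rightarrow> (nat \<Rightarrow> nat) \<Rightarrow> 'a" where
  "mm n z s = prod_list (map (\<lambda>i. z (s i)) [0..<n])"

lemma length_blk[simp]: "n \<ge> 1 \<Longrightarrow> length (blk n c) = n" by (simp add: blk_def)
lemma length_wd[simp]: "length (wd n s) = n" by (simp add: wd_def)

lemma blk_eval_aux:
  "length ws = Suc m \<Longrightarrow> prod_list (map2 (\<lambda>w u. z w * u) ws (replicate m 1 @ [c])) = prod_list (map z ws) * c"
proof (induct m arbitrary: ws)
  case 0 then show ?case by (cases ws) auto
next
  case (Suc m)
  then obtain w ws' where "ws = w # ws'" "length ws' = Suc m" by (cases ws) auto
  then show ?case using Suc by (simp add: mult.assoc)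
qed

lemma blk_eval: "n \<ge> 1 \<Longrightarrow> prod_list (map2 (\<lambda>w u. z w * u) (wd n s) (blk n c)) = mm n z s * c"
  unfolding blk_def mm_def using blk_eval_aux[of "wd n s" "n - 1" z c]
  by (simp add: wd_def comp_def)

lemma mnm_eval:
  assumes "n \<ge> 1"
  shows "gmono_eval (fst (mnm n c0 c1 c2 s t)) (snd (mnm n c0 c1 c2 s t)) z = c0 * (mm n z s * c1) * (mm n z t * c2)"
  using assms by (simp add: mnm_def gmono_eval_def zip_append blk_eval mult.assoc)

lemma idx_prod:
  assumes "\<forall>i. k \<le> i \<and> i < k + m \<longrightarrow> \<phi> i 1 = 1"
  shows "prod_list (map2 \<phi> [k..<k + Suc m] (replicate m 1 @ [c])) = \<phi> (k + m) (c::'a::ring_1)"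
  using assms
proof (induct m arbitrary: k)
  case 0 then show ?case by simp
next
  case (Suc m)
  have u: "[k..<k + Suc (Suc m)] = k # [Suc k..<Suc k + Suc m]" by (simp add: upt_conv_Cons)
  have "prod_list (map2 \<phi> [Suc k..<Suc k + Suc m] (replicate m 1 @ [c])) = \<phi> (Suc k + m) c"
    using Suc.hyps[of "Suc k"] Suc.prems by auto
  moreover have "\<phi> k 1 = 1" using Suc.prems by auto
  ultimately show ?case unfolding u by (simp del: upt_Suc)
qed

lemma mnm_zero:
  fixes \<phi> :: "nat \<Rightarrow> 'a::ring_1 \<Rightarrow> 'a"
  assumes n: "n \<ge> 1" and E: "\<forall>i. i \<noteq> 0 \<and> i \<noteq> n \<and> i \<noteq> 2*n \<longrightarrow> \<phi> i 1 = 1"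
  shows "prod_list (map2 \<phi> [0..<length (fst (mnm n c0 c1 c2 s t))] (fst (mnm n c0 c1 c2 s t)))
     = \<phi> 0 c0 * (\<phi> n c1 * \<phi> (2*n) c2)"
proof -
  obtain m where m: "n = Suc m" using n by (cases n) auto
  have len2: "length (c0 # blk n c1 @ blk n c2) = Suc (n + n)" using n by simp
  have u1: "[0..<Suc (n + n)] = 0 # [1..<1 + n + n]" by (simp add: upt_conv_Cons)
  have u2: "[1..<1 + n + n] = [1..<1 + n] @ [1 + n..<1 + n + n]"
    by (metis le_add1 upt_add_eq_append)
  have b: "blk (Suc m) c = replicate m 1 @ [c]" for c :: 'a by (simp add: blk_def)
  have p1: "prod_list (map2 \<phi> [1..<1 + n] (blk n c1)) = \<phi> n c1"
  proof -
    have "prod_list (map2 \<phi> [1..<1 + Suc m] (replicate m 1 @ [c1])) = \<phi> (1 + m) c1"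
      by (rule idx_prod) (use E m in auto)
    then show ?thesis by (simp del: upt_Suc add: m b)
  qed
  have p2: "prod_list (map2 \<phi> [1 + n..<1 + n + n] (blk n c2)) = \<phi> (2*n) c2"
  proof -
    have "prod_list (map2 \<phi> [(1 + n)..<(1 + n) + Suc m] (replicate m 1 @ [c2])) = \<phi> (1 + n + m) c2"
      by (rule idx_prod) (use E m in auto)
    moreover have "1 + n + m = 2 * n" "1 + n + n = (1 + n) + Suc m" using m by simp_all
    ultimately show ?thesis by (simp del: upt_Suc add: m b mult_2)
  qed
  have l1: "length [1..<1 + n] = length (blk n c1)" using n by simp
  have s1: "map2 \<phi> [0..<Suc (n + n)] (c0 # blk n c1 @ blk n c2)
     = \<phi> 0 c0 # (map2 \<phi> [1..<1 + n] (blk n c1) @ map2 \<phi> [1 + n..<1 + n + n] (blk n c2))"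
    apply (subst u1)
    apply (subst u2)
    using l1 by (simp del: upt_Suc)
  have pc: "prod_list (x # (A @ B)) = x * (prod_list A * prod_list B)" for x :: 'a and A B by simp
  show ?thesis
    unfolding mnm_def fst_conv len2 s1 pc p1 p2 ..
qed


lemma snd_mnm[simp]: "snd (mnm n c0 c1 c2 s t) = wd n s @ wd n t" by (simp add: mnm_def)

lemma mnm_eval_case:
  assumes "n \<ge> 1"
  shows "(case mnm n c0 c1 c2 s t of (us, ws) \<Rightarrow> gmono_eval us ws z) = c0 * (mm n z s * c1) * (mm n z t * c2)"
  using mnm_eval[OF assms, of c0 c1 c2 s t z] by (simp add: prod.case_eq_if)

lemma mnm_wf: "n \<ge> 1 \<Longrightarrow> length (fst (mnm n c0 c1 c2 s t)) = Suc (length (snd (mnm n c0 c1 c2 s t)))"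
  by (simp add: mnm_def)

lemma wd_inj:
  assumes "s permutes {..<n}" "t permutes {..<n}" "wd n s = wd n t"
  shows "s = t"
proof
  fix i show "s i = t i"
  proof (cases "i < n")
    case True then show ?thesis using assms(3) unfolding wd_def map_eq_conv by auto
  next
    case False then show ?thesis using assms(1,2) by (simp add: permutes_not_in)
  qed
qed

lemma sum_list_concat_map:
  "sum_list (map f (concat xss)) = sum_list (map (\<lambda>xs. sum_list (map f xs)) xss)"
  by (induct xss) simp_all

lemma dsum:
  fixes X Y W :: "'a::ring_1"
  shows "X * sum F S * Y * sum F S * W = (\<Sum>s\<in>S. \<Sum>t\<in>S. X * F s * Y * F t * W)"
  apply (simp add: sum_distrib_left sum_distrib_right mult.assoc)
  apply (rule sum.swap)
  done



lemma shape:
  assumes a: "a \<in> ext_centroid" and b: "b \<in> ext_centroid"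
  shows "(x * a * b) * (m1 * y) * (m2 * w) = x * (a * m1) * y * (b * m2) * w"
proof -
  have "b * (m1 * y) = (m1 * y) * b" using C_comm[OF b] by blast
  then have "(x * a * b) * (m1 * y) * (m2 * w) = x * a * ((m1 * y) * b) * (m2 * w)"
    by (simp add: mult.assoc)
  then show ?thesis by (simp add: mult.assoc)
qed

lemma Cf_lin:
  assumes A: "C_functional A" and c: "c \<in> ext_centroid"
  shows "A (x * c) = c * A x"
proof -
  have "x * c = c * x" using C_comm[OF c, of x] by simp
  moreover have "A (c * x) = c * A x" using A c unfolding C_functional_def by blast
  ultimately show ?thesis by simp
qed

lemma Cf_neg: "C_functional A \<Longrightarrow> A (- x) = - A x"
proof -
  assume A: "C_functional A"
  have "A ((-1) * x) = (-1) * A x" using A C_uminus[OF C_1] unfolding C_functional_def by blast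
  then show ?thesis by simp
qed

theorem lemma3:
  fixes R :: "'a::ring_1 set" and n :: nat and \<alpha> :: "(nat \<Rightarrow> nat) \<Rightarrow> 'a"
    and a1 a2 a3 a4 a5 a6 :: 'a
  assumes "prime_ring R" and "noncommutative R" and "char_not_2 R"
    and "is_utumi_quotient_ring R"
    and "multilin_coeffs n \<alpha>" and "\<not> central_valued R n \<alpha>"
    and "\<forall>z. (\<forall>i<n. z i \<in> R) \<longrightarrow>
           (let f = multilin_eval n \<alpha> z in
              a1 * f * f + a2 * f * a3 * f + f * a5 * f * a6 + f * a4 * f - a5 * f * f * a6 = 0)"
    and "\<not> satisfies_nontrivial_GPI R"
  shows "(a2 \<in> ext_centroid \<and> a5 \<in> ext_centroid) \<or> (a2 \<in> ext_centroid \<and> a6 \<in> ext_centroid) \<or>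
         (a3 \<in> ext_centroid \<and> a5 \<in> ext_centroid) \<or> (a3 \<in> ext_centroid \<and> a6 \<in> ext_centroid)"
proof (rule ccontr)
  assume neg: "\<not> ?thesis"
  then have cases: "(a2 \<notin> ext_centroid \<and> a3 \<notin> ext_centroid) \<or> (a5 \<notin> ext_centroid \<and> a6 \<notin> ext_centroid)"
    by blast
  have F: "Cfield TYPE('a)" unfolding Cfield_def using C_inverse[OF assms(1) assms(4)] by blast
  have one: "(1::'a) \<noteq> 0"
  proof
    assume "(1::'a) = 0"
    then have all0: "x = 0" for x :: 'a
    proof -
      have "x = x * 1" by simp
      then show ?thesis using \<open>(1::'a) = 0\<close> by simp
    qed
    obtain x y :: 'a where "x * y \<noteq> y * x" using assms(2) unfolding noncommutative_def by blast
    then show False using all0[of x] all0[of y] by simp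
  qed
  define S where "S = {s. s permutes {..<n}}"
  have finS: "finite S" unfolding S_def by (simp add: finite_permutations)
  have aC: "\<alpha> s \<in> ext_centroid" if "s \<in> S" for s
    using assms(5) that unfolding multilin_coeffs_def S_def by blast
  have n1: "n \<ge> 1"
  proof (rule ccontr)
    assume "\<not> n \<ge> 1"
    then have n0: "n = 0" by simp
    have "S = {id}" unfolding S_def n0 by simp
    then have "multilin_eval n \<alpha> z = \<alpha> id" for z unfolding multilin_eval_def S_def[symmetric]
      by (simp add: n0)
    moreover have "\<alpha> id \<in> ext_centroid" using aC \<open>S = {id}\<close> by blast
    ultimately have "central_valued R n \<alpha>" unfolding central_valued_def by simp
    then show False using assms(6) by blast
  qed
  obtain s0 where s0S: "s0 \<in> S" and s0: "\<alpha> s0 \<noteq> 0"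
  proof (rule ccontr)
    assume "\<not> thesis"
    then have "\<forall>s\<in>S. \<alpha> s = 0" using that by blast
    then have "multilin_eval n \<alpha> z = 0" for z unfolding multilin_eval_def S_def[symmetric] by simp
    then have "central_valued R n \<alpha>" unfolding central_valued_def by simp
    then show False using assms(6) by blast
  qed
  have s0p: "s0 permutes {..<n}" using s0S S_def by blast
  define \<beta> where "\<beta> = \<alpha> s0 * \<alpha> s0"
  have \<beta>C: "\<beta> \<in> ext_centroid" unfolding \<beta>_def using aC[OF s0S] C_mult by blast
  have \<beta>0: "\<beta> \<noteq> 0"
  proof
    assume b0: "\<beta> = 0"
    obtain q where "q \<in> ext_centroid" "\<alpha> s0 * q = 1" using F aC[OF s0S] s0 unfolding Cfield_def by blast
    then have "\<beta> * q * q = 1" unfolding \<beta>_def by (simp add: mult.assoc)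
    then show False using b0 one by simp
  qed
  obtain ps where ps: "set ps = S" "distinct ps" using finite_distinct_list[OF finS] by blast
  define m5 where "m5 s t = [mnm n (a1 * \<alpha> s * \<alpha> t) 1 1 s t, mnm n (a2 * \<alpha> s * \<alpha> t) a3 1 s t,
      mnm n (1 * \<alpha> s * \<alpha> t) a5 a6 s t, mnm n (1 * \<alpha> s * \<alpha> t) a4 1 s t,
      mnm n ((- a5) * \<alpha> s * \<alpha> t) 1 a6 s t]" for s t
  define P where "P = concat (map (\<lambda>s. concat (map (\<lambda>t. m5 s t) ps)) ps)"
  have wf: "gpoly_wf P"
    unfolding gpoly_wf_def P_def m5_def using n1 by (auto simp: mnm_def)
  have sumP: "sum_list (map g P) = (\<Sum>s\<in>S. \<Sum>t\<in>S. sum_list (map g (m5 s t)))" for g :: "'a list \<times> nat list \<Rightarrow> 'a"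
    unfolding P_def sum_list_concat_map map_map comp_def
    by (simp add: sum_list_distinct_conv_sum_set[OF ps(2)] ps(1))
  have ev: "gpoly_eval P z = 0" if z: "\<forall>i. z i \<in> R" for z
  proof -
    define Fs where "Fs s = \<alpha> s * mm n z s" for s
    define f where "f = multilin_eval n \<alpha> z"
    have f: "f = sum Fs S" unfolding f_def multilin_eval_def Fs_def mm_def S_def ..
    have m5v: "sum_list (map (\<lambda>(us, ws). gmono_eval us ws z) (m5 s t)) =
       a1 * Fs s * 1 * Fs t * 1 + a2 * Fs s * a3 * Fs t * 1 + 1 * Fs s * a5 * Fs t * a6
       + 1 * Fs s * a4 * Fs t * 1 + (- a5) * Fs s * 1 * Fs t * a6" if "s \<in> S" "t \<in> S" for s t
    proof -
      have e: "(case mnm n (x * \<alpha> s * \<alpha> t) c1 c2 s t of (us, ws) \<Rightarrow> gmono_eval us ws z)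
          = x * Fs s * c1 * Fs t * c2" for x c1 c2
        by (simp only: mnm_eval_case[OF n1] shape[OF aC[OF that(1)] aC[OF that(2)]] Fs_def)
      show ?thesis unfolding m5_def list.map e by (simp add: add.assoc)
    qed
    have "gpoly_eval P z = (\<Sum>s\<in>S. \<Sum>t\<in>S.
       a1 * Fs s * 1 * Fs t * 1 + a2 * Fs s * a3 * Fs t * 1 + 1 * Fs s * a5 * Fs t * a6
       + 1 * Fs s * a4 * Fs t * 1 + (- a5) * Fs s * 1 * Fs t * a6)"
      unfolding gpoly_eval_def sumP using m5v by (simp cong: sum.cong)
    also have "\<dots> = a1 * sum Fs S * 1 * sum Fs S * 1 + a2 * sum Fs S * a3 * sum Fs S * 1
       + 1 * sum Fs S * a5 * sum Fs S * a6 + 1 * sum Fs S * a4 * sum Fs S * 1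
       + (- a5) * sum Fs S * 1 * sum Fs S * a6"
      by (simp only: sum.distrib dsum)
    also have "\<dots> = a1 * f * f + a2 * f * a3 * f + f * a5 * f * a6 + f * a4 * f - a5 * f * f * a6"
      unfolding f by simp
    also have "\<dots> = 0"
    proof -
      have "\<forall>i<n. z i \<in> R" using z by blast
      then have "let f = multilin_eval n \<alpha> z in
              a1 * f * f + a2 * f * a3 * f + f * a5 * f * a6 + f * a4 * f - a5 * f * f * a6 = 0"
        using assms(7) by blast
      then show ?thesis unfolding f_def Let_def .
    qed
    finally show ?thesis .
  qed
  have nz: "\<not> gpoly_zero P"
  proof -
    obtain x0 :: 'a where x0: "x0 \<notin> ext_centroid" using cases by blast
    obtain E :: "'a \<Rightarrow> 'a" where E: "C_functional E" "E 1 = 1" using functional_exists[OF F x0, of 1 0] by auto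
    have key: "\<exists>A B D. C_functional A \<and> C_functional B \<and> C_functional D \<and>
      (\<beta> * A a1) * (B 1 * D 1) + (\<beta> * A a2) * (B a3 * D 1) + (\<beta> * A 1) * (B a5 * D a6)
      + (\<beta> * A 1) * (B a4 * D 1) + (\<beta> * A (- a5)) * (B 1 * D a6) \<noteq> 0"
    proof (cases "a2 \<notin> ext_centroid \<and> a3 \<notin> ext_centroid")
      case True
      obtain A where A: "C_functional A" "A 1 = 0" "A a2 = 1" using functional_exists[OF F, of a2 0 1] True by auto
      obtain B where B: "C_functional B" "B 1 = 0" "B a3 = 1" using functional_exists[OF F, of a3 0 1] True by auto
      have V: "(\<beta> * A a1) * (B 1 * E 1) + (\<beta> * A a2) * (B a3 * E 1) + (\<beta> * A 1) * (B a5 * E a6)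
      + (\<beta> * A 1) * (B a4 * E 1) + (\<beta> * A (- a5)) * (B 1 * E a6) \<noteq> 0"
        by (simp add: A B E \<beta>0)
      show ?thesis
        apply (rule_tac x=A in exI)
        apply (rule_tac x=B in exI)
        apply (rule_tac x=E in exI)
        using A(1) B(1) E V by simp
    next
      case False
      then have T: "a5 \<notin> ext_centroid" "a6 \<notin> ext_centroid" using cases by blast+
      obtain A where A: "C_functional A" "A 1 = 0" "A a5 = 1" using functional_exists[OF F, of a5 0 1] T by auto
      obtain D where D: "C_functional D" "D 1 = 0" "D a6 = 1" using functional_exists[OF F, of a6 0 1] T by auto
      have V: "(\<beta> * A a1) * (E 1 * D 1) + (\<beta> * A a2) * (E a3 * D 1) + (\<beta> * A 1) * (E a5 * D a6)
      + (\<beta> * A 1) * (E a4 * D 1) + (\<beta> * A (- a5)) * (E 1 * D a6) \<noteq> 0"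
        by (simp add: A D E \<beta>0 Cf_neg[OF A(1)])
      show ?thesis
        apply (rule_tac x=A in exI)
        apply (rule_tac x=E in exI)
        apply (rule_tac x=D in exI)
        using A(1) D(1) E V by simp
    qed
    then obtain A B D where ABDE: "C_functional A" "C_functional B" "C_functional D" "C_functional E" "E 1 = 1"
      and V0: "(\<beta> * A a1) * (B 1 * D 1) + (\<beta> * A a2) * (B a3 * D 1) + (\<beta> * A 1) * (B a5 * D a6)
      + (\<beta> * A 1) * (B a4 * D 1) + (\<beta> * A (- a5)) * (B 1 * D a6) \<noteq> 0" using E by blast
    define \<Phi> where "\<Phi> i = (if i = 0 then A else if i = n then B else if i = 2 * n then D else E)" for i
    have \<Phi>f: "\<forall>i. C_functional (\<Phi> i)" unfolding \<Phi>_def using ABDE by auto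
    have \<Phi>E: "\<forall>i. i \<noteq> 0 \<and> i \<noteq> n \<and> i \<noteq> 2*n \<longrightarrow> \<Phi> i 1 = 1" unfolding \<Phi>_def using ABDE by auto
    have \<Phi>0: "\<Phi> 0 = A" and \<Phi>n: "\<Phi> n = B" and \<Phi>2: "\<Phi> (2*n) = D" unfolding \<Phi>_def using n1 by auto
    define w0 where "w0 = wd n s0 @ wd n s0"
    define h where "h = (\<lambda>(us::'a list, ws::nat list). prod_list (map2 \<Phi> [0..<length us] us))"
    have hp: "h p = prod_list (map2 \<Phi> [0..<length (fst p)] (fst p))" for p
      by (cases p) (simp add: h_def)
    have weq: "(wd n s @ wd n t = w0) = (s = s0 \<and> t = s0)" if "s \<in> S" "t \<in> S" for s t
      using wd_inj[of s n s0] wd_inj[of t n s0] that s0p unfolding w0_def S_def by auto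
    have hm: "h (mnm n (x * \<alpha> s0 * \<alpha> s0) c1 c2 s0 s0) = (\<beta> * A x) * (B c1 * D c2)" for x c1 c2
    proof -
      have "h (mnm n (x * \<alpha> s0 * \<alpha> s0) c1 c2 s0 s0) = \<Phi> 0 (x * \<alpha> s0 * \<alpha> s0) * (\<Phi> n c1 * \<Phi> (2*n) c2)"
        unfolding hp by (rule mnm_zero[where \<phi>=\<Phi>, OF n1 \<Phi>E])
      also have "\<dots> = (\<beta> * A x) * (B c1 * D c2)"
        unfolding \<Phi>0 \<Phi>n \<Phi>2 using Cf_lin[OF ABDE(1) \<beta>C, of x] by (simp add: \<beta>_def mult.assoc)
      finally show ?thesis .
    qed
    have inner: "sum_list (map (\<lambda>x. if (case x of (us, ws) \<Rightarrow> ws = w0) then h x else 0) (m5 s t))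
       = (if s = s0 \<and> t = s0 then
          (\<beta> * A a1) * (B 1 * D 1) + (\<beta> * A a2) * (B a3 * D 1) + (\<beta> * A 1) * (B a5 * D a6)
          + (\<beta> * A 1) * (B a4 * D 1) + (\<beta> * A (- a5)) * (B 1 * D a6) else 0)"
      if "s \<in> S" "t \<in> S" for s t
    proof (cases "s = s0 \<and> t = s0")
      case True
      then have st: "s = s0" "t = s0" by auto
      have c: "(case x of (us, ws) \<Rightarrow> ws = w0)" if "x \<in> set (m5 s t)" for x
        using that True unfolding m5_def by (auto simp: mnm_def w0_def)
      have m: "map (\<lambda>x. if (case x of (us, ws) \<Rightarrow> ws = w0) then h x else 0) (m5 s t) = map h (m5 s t)"
        by (rule map_cong) (auto simp: c)
      have sv: "sum_list (map h (m5 s0 s0)) =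
          (\<beta> * A a1) * (B 1 * D 1) + (\<beta> * A a2) * (B a3 * D 1) + (\<beta> * A 1) * (B a5 * D a6)
          + (\<beta> * A 1) * (B a4 * D 1) + (\<beta> * A (- a5)) * (B 1 * D a6)"
        unfolding m5_def list.map hm by (simp add: add.assoc)
      show ?thesis unfolding m unfolding st using sv by simp
    next
      case False
      have c: "\<not> (case x of (us, ws) \<Rightarrow> ws = w0)" if "x \<in> set (m5 s t)" for x
        using that weq[OF \<open>s \<in> S\<close> \<open>t \<in> S\<close>] False unfolding m5_def by (auto simp: mnm_def)
      have m: "map (\<lambda>x. if (case x of (us, ws) \<Rightarrow> ws = w0) then h x else 0) (m5 s t) = map (\<lambda>x. 0) (m5 s t)"
        by (rule map_cong) (auto simp: c)
      show ?thesis unfolding m using False by auto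
    qed
    define V where "V = (\<beta> * A a1) * (B 1 * D 1) + (\<beta> * A a2) * (B a3 * D 1) + (\<beta> * A 1) * (B a5 * D a6)
          + (\<beta> * A 1) * (B a4 * D 1) + (\<beta> * A (- a5)) * (B 1 * D a6)"
    have in2: "(\<Sum>t\<in>S. if s = s0 \<and> t = s0 then V else 0) = (if s = s0 then V else 0)" for s
      by (cases "s = s0") (simp_all add: finS s0S)
    have "sum_list (map h (filter (\<lambda>(us, ws). ws = w0) P)) = V"
      unfolding sum_list_map_filter' sumP
      using inner[folded V_def] in2 by (simp add: finS s0S)
    show ?thesis unfolding gpoly_zero_def
    proof
      assume "\<forall>w \<phi>. (\<forall>i. C_functional (\<phi> i)) \<longrightarrow>
        sum_list (map (\<lambda>(us, ws). prod_list (map2 \<phi> [0..<length us] us)) (filter (\<lambda>(us, ws). ws = w) P)) = 0"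
      then have "(\<forall>i. C_functional (\<Phi> i)) \<longrightarrow>
        sum_list (map (\<lambda>(us, ws). prod_list (map2 \<Phi> [0..<length us] us)) (filter (\<lambda>(us, ws). ws = w0) P)) = 0"
        by (rule spec[of _ \<Phi>, OF spec[of _ w0]])
      then have "sum_list (map h (filter (\<lambda>(us, ws). ws = w0) P)) = 0" using \<Phi>f unfolding h_def by (rule mp)
      then show False using \<open>sum_list (map h (filter (\<lambda>(us, ws). ws = w0) P)) = V\<close> V0 V_def by simp
    qed
  qed
  have "satisfies_nontrivial_GPI R" unfolding satisfies_nontrivial_GPI_def
    apply (rule exI[where x=P])
    using wf nz ev by simp
  then show False using assms(8) by blast
qed

end
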